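(* If a spherical curve $P$ has a coherent bigon, then $r(P)\le 2$.
   Context: A spherical curve is a smooth immersion $P:S^1\to S^2$ whose self-intersections are finitely many transverse double points, called crossings. It is oriented and has at least one crossing. Regions are the components of $S^2\setminus P(S^1)$, and edges are the arcs of the curve between consecutive crossings. An $n$-gon is a region bounded by $n$ edges; a bigon is a $2$-gon. A region is coherent if its boundary edges, with the orientations induced from $P$, all run in the same rotational direction around the region; otherwise it is incoherent. In Gauss-word terms, a bigon with crossings $y,z$ is coherent iff the word has the form $y z\,W_1\,z y\,W_2$, and incoherent iff it has the form $y z\,W_1\,y z\,W_2$. The Gauss word is the cyclic word of crossings met in one traversal of the curve; each crossing appears twice. Crossings $a,b$ are interlaced if their occurrences alternate $a\dots b\dots a\dots b$. A crossing is reducible if no crossing is interlaced with it; equivalently, only three distinct regions meet at it. $P$ is reducible if it has a reducible crossing, and reduced otherwise. The inverse-half-twisted splice $I$ at a crossing $p$ takes the curve with cyclic Gauss word $p\,A\,p\,B$ to the curve with Gauss word $\overline{A}\,B$, where $\overline{A}$ is $A$ reversed. Geometrically, $p$ is smoothed in the unique way giving a single closed curve, and the result is re-oriented. The reductivity $r(P)$ is the minimal number of successive applications of $I$ needed to reach a reducible spherical curve; $r(P)=0$ if $P$ is reducible. *)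

theory Defs
  imports Main
begin

text \<open>Combinatorial model of an oriented spherical curve (up to orientation-preserving
homeomorphism of the sphere): a Gauss word w (cyclic; each crossing occurs exactly twice)
together with a local orientation eps at every crossing, which fixes the cyclic
counterclockwise order of the four half-edges at the crossing.  This is a rotation
system of the 4-regular curve graph; the curve lies on the sphere iff the number of
faces equals V - E + 2 = n + 2 where n is the number of crossings (Euler).\<close>

definition gauss_word :: "'a list \<Rightarrow> bool" where
  "gauss_word w \<longleftrightarrow> w \<noteq> [] \<and> (\<forall>c\<in>set w. count_list w c = 2)"

definition fst_pos :: "'a list \<Rightarrow> 'a \<Rightarrow> nat" where
  "fst_pos w c = (LEAST i. i < length w \<and> w ! i = c)"

definition snd_pos :: "'a list \<Rightarrow> 'a \<Rightarrow> nat" where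
  "snd_pos w c = (GREATEST i. i < length w \<and> w ! i = c)"

text \<open>Edge i runs from position i to position (i+1) mod length w.
Half-edges: (j, True) = outgoing half-edge at position j (start of edge j),
(j, False) = incoming half-edge at position j (end of edge (j-1) mod length w).\<close>

definition rot :: "'a list \<Rightarrow> ('a \<Rightarrow> bool) \<Rightarrow> nat \<times> bool \<Rightarrow> nat \<times> bool" where
  "rot w eps h =
    (let c = w ! fst h; p = fst_pos w c; q = snd_pos w c in
     if eps c then
       (if h = (p, False) then (q, True) else if h = (q, True) then (p, True)
        else if h = (p, True) then (q, False) else (p, False))
     else
       (if h = (p, False) then (q, False) else if h = (q, False) then (p, True)
        else if h = (p, True) then (q, True) else (p, False)))"

text \<open>Darts: (i, True) = edge i traversed along the orientation of the curve,
(i, False) = edge i traversed against it.\<close>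

definition dart_end :: "'a list \<Rightarrow> nat \<times> bool \<Rightarrow> nat \<times> bool" where
  "dart_end w d = (if snd d then ((fst d + 1) mod length w, False) else (fst d, True))"

definition dart_of_start :: "'a list \<Rightarrow> nat \<times> bool \<Rightarrow> nat \<times> bool" where
  "dart_of_start w h = (if snd h then (fst h, True)
                        else ((fst h + length w - 1) mod length w, False))"

definition face_next :: "'a list \<Rightarrow> ('a \<Rightarrow> bool) \<Rightarrow> nat \<times> bool \<Rightarrow> nat \<times> bool" where
  "face_next w eps d = dart_of_start w (rot w eps (dart_end w d))"

definition darts :: "'a list \<Rightarrow> (nat \<times> bool) set" where
  "darts w = {0..<length w} \<times> UNIV"

definition face_of :: "'a list \<Rightarrow> ('a \<Rightarrow> bool) \<Rightarrow> nat \<times> bool \<Rightarrow> (nat \<times> bool) set" where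
  "face_of w eps d = {d'. \<exists>k. (face_next w eps ^^ k) d = d'}"

definition regions :: "'a list \<Rightarrow> ('a \<Rightarrow> bool) \<Rightarrow> (nat \<times> bool) set set" where
  "regions w eps = face_of w eps ` darts w"

definition spherical_curve :: "'a list \<Rightarrow> ('a \<Rightarrow> bool) \<Rightarrow> bool" where
  "spherical_curve w eps \<longleftrightarrow> gauss_word w \<and> card (regions w eps) = length w div 2 + 2"

text \<open>coherent bigon: a region bounded by two edges, both traversed in the same
rotational direction around the region (i.e. both darts agree with the curve
orientation, or both disagree)\<close>
definition has_coherent_bigon :: "'a list \<Rightarrow> ('a \<Rightarrow> bool) \<Rightarrow> bool" where
  "has_coherent_bigon w eps \<longleftrightarrow>
     (\<exists>F\<in>regions w eps. card F = 2 \<and> ((\<forall>d\<in>F. snd d) \<or> (\<forall>d\<in>F. \<not> snd d)))"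

text \<open>Gauss-word notions (words are cyclic, hence the rotations)\<close>
definition interlaced :: "'a list \<Rightarrow> 'a \<Rightarrow> 'a \<Rightarrow> bool" where
  "interlaced w a b \<longleftrightarrow> a \<noteq> b \<and>
     (\<exists>k A B. rotate k w = a # A @ a # B \<and> count_list A b = 1)"

definition reducible :: "'a list \<Rightarrow> bool" where
  "reducible w \<longleftrightarrow> (\<exists>c\<in>set w. \<not> (\<exists>d. interlaced w c d))"

definition splice_step :: "'a list \<Rightarrow> 'a list \<Rightarrow> bool" where
  "splice_step w w' \<longleftrightarrow> (\<exists>k p A B. rotate k w = p # A @ p # B \<and> w' = rev A @ B)"

definition reductivity :: "'a list \<Rightarrow> nat" where
  "reductivity w = (LEAST k. \<exists>w'. (splice_step ^^ k) w w' \<and> reducible w')"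

end

theory Submission
  imports Defs
begin



lemma count_rotate[simp]: "count_list (rotate n xs) x = count_list xs x"
  by (metis count_list_append append_take_drop_id add.commute rotate_drop_take)

lemma count_app: "count_list (xs @ ys) x = count_list xs x + count_list ys x"
  by (rule count_list_append)

lemma count0: "count_list xs x = 0 \<longleftrightarrow> x \<notin> set xs"
  by (induct xs) auto

lemma count_rev: "count_list (rev xs) x = count_list xs x"
  by (induct xs) auto



lemma rot_eq_cases:
  assumes "a \<notin> set A" "a \<notin> set B" "a \<notin> set A'" "a \<notin> set B'"
    and "rotate j (a#A@a#B) = a#A'@a#B'"
  shows "(A' = A \<and> B' = B) \<or> (A' = B \<and> B' = A)"
proof -
  let ?L = "a#A@a#B"
  define j' where "j' = j mod length ?L"
  have jl: "j' < length ?L" unfolding j'_def by simp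
  have eq: "drop j' ?L @ take j' ?L = a#A'@a#B'"
    using assms(5) by (simp add: rotate_drop_take j'_def)
  have "drop j' ?L \<noteq> []" using jl by simp
  have dd: "drop j' ?L = ?L ! j' # drop (Suc j') ?L" using jl by (rule Cons_nth_drop_Suc[symmetric])
  have "?L ! j' = a" using eq by (subst (asm) dd) simp
  have "j' = 0 \<or> j' = Suc (length A)"
  proof (rule ccontr)
    assume c: "\<not> ?thesis"
    show False
    proof (cases "j' \<le> length A")
      case True
      then have "?L ! j' = A ! (j' - 1)" using c True by (auto simp: nth_Cons' nth_append)
      moreover have "j' - 1 < length A" using True c by linarith
      ultimately show False using \<open>?L ! j' = a\<close> assms(1) by (metis nth_mem)
    next
      case False
      then have "?L ! j' = B ! (j' - length A - 2)" using c False
        by (auto simp: nth_append nth_Cons')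
      moreover have "j' - length A - 2 < length B" using False c jl by simp
      ultimately show False using \<open>?L ! j' = a\<close> assms(2) by (metis nth_mem)
    qed
  qed
  then show ?thesis
  proof
    assume "j' = 0"
    then have "a#A@a#B = a#A'@a#B'" using eq by simp
    then show ?thesis using assms(1-4) by (metis append_Cons_eq_iff list.inject)
  next
    assume "j' = Suc (length A)"
    then have "a#B@a#A = a#A'@a#B'" using eq by simp
    then show ?thesis using assms(1-4) by (metis append_Cons_eq_iff list.inject)
  qed
qed

lemma rot_unique:
  assumes "count_list xs a = 2"
    and "rotate m xs = a#A@a#B" and "rotate m' xs = a#A'@a#B'"
  shows "(A' = A \<and> B' = B) \<or> (A' = B \<and> B' = A)"
proof -
  have c1: "count_list (a#A@a#B) a = 2" using assms(1,2) by (metis count_rotate)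
  have c2: "count_list (a#A'@a#B') a = 2" using assms(1,3) by (metis count_rotate)
  have n: "a \<notin> set A" "a \<notin> set B" using c1 by (auto simp: count0[symmetric])
  have n': "a \<notin> set A'" "a \<notin> set B'" using c2 by (auto simp: count0[symmetric])
  let ?n = "length xs"
  have pos: "?n > 0" using assms(2) by (metis length_greater_0_conv length_rotate list.distinct(1))
  define m'' where "m'' = m' + ?n - m mod ?n"
  have "rotate m'' (rotate m xs) = rotate m' xs"
  proof -
    have e: "(m'' + m) mod ?n = m' mod ?n"
    proof -
      have a1: "m mod ?n < ?n" using pos by simp
      have a2: "m = ?n*(m div ?n) + m mod ?n" by simp
      have "m'' + m = m' + (?n + ?n * (m div ?n))" unfolding m''_def using a1 a2 by linarith
      then show ?thesis by (metis add.assoc mod_add_self2 mod_mult_self2 mult.commute)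
    qed
    have "rotate m'' (rotate m xs) = rotate (m'' + m) xs" by (simp add: rotate_rotate)
    also have "\<dots> = rotate ((m'' + m) mod ?n) xs" by (metis rotate_conv_mod)
    also have "\<dots> = rotate m' xs" by (metis e rotate_conv_mod)
    finally show ?thesis .
  qed
  then show ?thesis using rot_eq_cases[OF n n'] assms(2,3) by metis
qed




lemma red_adj:
  assumes "count_list xs c = 2" "rotate j xs = c#c#V" "\<forall>d. d \<noteq> c \<longrightarrow> count_list xs d \<noteq> 1"
  shows "reducible xs"
proof -
  have cin: "c \<in> set xs" using assms(1) count0[of xs c] by auto
  have "\<not> interlaced xs c d" for d
  proof
    assume "interlaced xs c d"
    then obtain k A B where cd: "c \<noteq> d" and r: "rotate k xs = c#A@c#B" and cA: "count_list A d = 1"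
      unfolding interlaced_def by blast
    have "rotate j xs = c#[]@c#V" using assms(2) by simp
    from rot_unique[OF assms(1) this r] have "A = [] \<or> A = V" by auto
    then show False
    proof
      assume "A = []" then show False using cA by simp
    next
      assume "A = V"
      have "count_list xs d = count_list (c#c#V) d" by (metis assms(2) count_rotate)
      also have "\<dots> = count_list V d" using cd by simp
      finally show False using cA \<open>A = V\<close> assms(3) cd by metis
    qed
  qed
  then show ?thesis unfolding reducible_def using cin by blast
qed

lemma gauss_count: "gauss_word w \<Longrightarrow> count_list w c = 0 \<or> count_list w c = 2"
  unfolding gauss_word_def using count0 by metis

lemma two_steps: "splice_step a b \<Longrightarrow> splice_step b c \<Longrightarrow> (splice_step ^^ 2) a c"
  by (auto simp: numeral_2_eq_2 relcompp_apply)

lemma comb: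
  assumes g: "gauss_word w" and r: "rotate k w = y#z#W1@z#y#W2"
  shows "\<exists>m\<le>2. \<exists>w'. (splice_step ^^ m) w w' \<and> reducible w'"
proof (cases "reducible w")
  case True
  then show ?thesis by (intro exI[of _ 0]) auto
next
  case False
  have cnt: "count_list w c = count_list (y#z#W1@z#y#W2) c" for c by (metis r count_rotate)
  have yin: "y \<in> set w" by (metis r list.set_intros(1) set_rotate)
  have cy: "count_list w y = 2" using g yin unfolding gauss_word_def by blast
  have yz: "y \<noteq> z" using cy cnt[of y] by auto
  have yW: "count_list W1 y = 0" "count_list W2 y = 0" using cy cnt[of y] yz by auto
  have zin: "z \<in> set w" by (metis r list.set_intros set_rotate)
  have cz: "count_list w z = 2" using g zin unfolding gauss_word_def by blast
  have zW: "count_list W1 z = 0" "count_list W2 z = 0" using cz cnt[of z] yz by auto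
  from False yin obtain x where "interlaced w y x" unfolding reducible_def by blast
  then obtain k' A B where xy: "y \<noteq> x" and r2: "rotate k' w = y#A@y#B" and cA: "count_list A x = 1"
    unfolding interlaced_def by blast
  have r1: "rotate k w = y#(z#W1@[z])@y#W2" using r by simp
  from rot_unique[OF cy r1 r2] have "A = z#W1@[z] \<or> A = W2" by auto
  have xz: "x \<noteq> z"
  proof
    assume "x = z"
    then show False using \<open>A = z#W1@[z] \<or> A = W2\<close> cA zW by auto
  qed
  have "count_list w x = 2" using g cA gauss_count[OF g, of x] cnt[of x] xy xz
    \<open>A = z#W1@[z] \<or> A = W2\<close> by auto
  then have c1: "count_list W1 x = 1" "count_list W2 x = 1"
    using cA cnt[of x] xy xz \<open>A = z#W1@[z] \<or> A = W2\<close> by auto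
  obtain P Q where W1: "W1 = P@x#Q" using c1(1)
    by (metis count0 split_list zero_neq_one)
  obtain R S where W2: "W2 = R@x#S" using c1(2)
    by (metis count0 split_list zero_neq_one)
  have xPQ: "count_list P x = 0" "count_list Q x = 0" "count_list R x = 0" "count_list S x = 0"
    using c1 W1 W2 by auto
  define w1 where "w1 = rev (Q@z#y#R) @ S@y#z#P"
  define w2 where "w2 = rev S @ Q @ [z] @ z # P @ rev R"
  have s1: "splice_step w w1"
  proof -
    have "rotate (length (y#z#P) + k) w = rotate (length (y#z#P)) ((y#z#P) @ (x#(Q@z#y#R)@x#(S)))"
      by (simp add: rotate_rotate[symmetric] r W1 W2)
    also have "\<dots> = x#(Q@z#y#R)@x#(S@y#z#P)" by (subst rotate_append) simp
    finally show ?thesis unfolding splice_step_def w1_def by blast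
  qed
  have s2: "splice_step w1 w2"
  proof -
    have "w1 = rev R @ (y#(z#rev Q@S)@y#(z#P))" unfolding w1_def by simp
    then have "rotate (length (rev R)) w1 = y#(z#rev Q@S)@y#(z#P@rev R)"
      using rotate_append[of "rev R" "y#(z#rev Q@S)@y#(z#P)"] by simp
    moreover have "w2 = rev (z#rev Q@S) @ (z#P@rev R)" unfolding w2_def by simp
    ultimately show ?thesis unfolding splice_step_def by blast
  qed
  have red: "reducible w2"
  proof (rule red_adj)
    show "count_list w2 z = 2" unfolding w2_def using zW W1 W2 xz by simp
    show "rotate (length (rev S @ Q)) w2 = z#z#(P @ rev R @ rev S @ Q)"
      unfolding w2_def by (simp add: rotate_append[of "rev S @ Q", simplified])
    show "\<forall>d. d \<noteq> z \<longrightarrow> count_list w2 d \<noteq> 1"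
    proof (intro allI impI)
      fix d assume dz: "d \<noteq> z"
      have "count_list w2 d = count_list P d + count_list Q d + count_list R d + count_list S d"
        unfolding w2_def using dz by simp
      moreover have "count_list w d = (if d = y then 2 else 0) + (if d = x then 2 else 0)
          + count_list P d + count_list Q d + count_list R d + count_list S d"
        using cnt[of d] dz W1 W2 xy yz by auto
      ultimately show "count_list w2 d \<noteq> 1" using gauss_count[OF g, of d] xPQ yW W1 W2
        by (cases "d = y"; cases "d = x") auto
    qed
  qed
  show ?thesis using two_steps[OF s1 s2] red by (intro exI[of _ 2]) auto
qed




lemma positions:
  assumes g: "gauss_word w" and c: "c \<in> set w"
  shows "fst_pos w c < snd_pos w c \<and> snd_pos w c < length w \<and> w ! fst_pos w c = c
     \<and> w ! snd_pos w c = c \<and> (\<forall>k<length w. w!k = c \<longrightarrow> k = fst_pos w c \<or> k = snd_pos w c)"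
proof -
  obtain X Y where w: "w = X@c#Y" and cX: "c \<notin> set X" using c by (metis split_list_first)
  have "count_list w c = 2" using g c unfolding gauss_word_def by blast
  then have "count_list Y c = 1" using w cX count0[of X c] by simp
  then obtain Y1 Y2 where Y: "Y = Y1@c#Y2" by (metis count0 split_list zero_neq_one)
  have cY: "c \<notin> set Y1" "c \<notin> set Y2" using \<open>count_list Y c = 1\<close> Y count0 by fastforce+
  define p where "p = length X"
  define q where "q = length X + 1 + length Y1"
  have wp: "w ! p = c" unfolding p_def w by simp
  have wq: "w ! q = c" unfolding q_def w Y by (simp add: nth_append)
  have pq: "p < q" "q < length w" unfolding p_def q_def w Y by auto
  have only: "k = p \<or> k = q" if "k < length w" "w ! k = c" for k
  proof (rule ccontr)
    assume nk: "\<not> (k = p \<or> k = q)"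
    consider "k < p" | "p < k \<and> k < q" | "q < k" using nk by linarith
    then show False
    proof cases
      case 1 then have "X ! k = c" using that unfolding w p_def by (simp add: nth_append)
      then show False using 1 cX unfolding p_def by (metis nth_mem)
    next
      case 2
      have b: "k - length X - 1 < length Y1" using 2 unfolding p_def q_def by auto
      have "Y1 ! (k - length X - 1) = c" using that 2 b unfolding w Y p_def q_def
        by (auto simp: nth_append nth_Cons')
      moreover note b
      ultimately show False using cY by (metis nth_mem)
    next
      case 3 then have "Y2 ! (k - q - 1) = c" using that unfolding w Y q_def
        by (auto simp: nth_append nth_Cons' split: if_splits)
      moreover have "k - q - 1 < length Y2" using 3 that unfolding w Y q_def by auto
      ultimately show False using cY by (metis nth_mem)
    qed
  qed
  have fp: "fst_pos w c = p" unfolding fst_pos_def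
    by (rule Least_equality) (use wp pq only in fastforce)+
  have sp: "snd_pos w c = q" unfolding snd_pos_def
    by (rule Greatest_equality) (use wq pq only in fastforce)+
  show ?thesis using fp sp wp wq pq only by auto
qed

lemma mod_back:
  assumes "(m::nat) < n" shows "((m + n - 1) mod n + 1) mod n = m"
proof (cases m)
  case 0
  then have "(m + n - 1) mod n = n - 1" using assms by simp
  then show ?thesis using assms 0 by simp
next
  case (Suc k)
  then have "m + n - 1 = k + n" by simp
  then have "(m + n - 1) mod n = k" using assms Suc by simp
  then show ?thesis using assms Suc by simp
qed

lemma trans_fwd:
  assumes g: "gauss_word w" and i: "i < length w"
    and f: "face_next w eps (i,True) = (j,True)"
  shows "j < length w \<and> w!j = w!((i+1) mod length w) \<and> j \<noteq> (i+1) mod length w"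
proof -
  define n where "n = length w"
  have n: "n > 0" using i n_def by linarith
  define i' where "i' = (i+1) mod n"
  have i': "i' < n" using n i'_def by simp
  define c where "c = w ! i'"
  have c: "c \<in> set w" using i' c_def n_def by simp
  note P = positions[OF g c]
  have ip: "i' = fst_pos w c \<or> i' = snd_pos w c" using P i' c_def n_def by blast
  have f': "dart_of_start w (rot w eps (i', False)) = (j, True)"
    using f unfolding face_next_def dart_end_def i'_def n_def by simp
  have "(if eps c then i' = fst_pos w c \<and> j = snd_pos w c else i' = snd_pos w c \<and> j = fst_pos w c)"
    using f' ip P unfolding dart_of_start_def rot_def Let_def c_def[symmetric]
    by (auto split: if_splits)
  then show ?thesis using P c_def i'_def n_def by (auto split: if_splits)
qed

lemma trans_bwd:
  assumes g: "gauss_word w" and i: "i < length w"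
    and f: "face_next w eps (i,False) = (j,False)"
  shows "j < length w \<and> w!((j+1) mod length w) = w!i \<and> (j+1) mod length w \<noteq> i"
proof -
  define n where "n = length w"
  have n: "n > 0" using i n_def by linarith
  define c where "c = w ! i"
  have c: "c \<in> set w" using i c_def by simp
  note P = positions[OF g c]
  have ip: "i = fst_pos w c \<or> i = snd_pos w c" using P i c_def by blast
  have f': "dart_of_start w (rot w eps (i, True)) = (j, False)"
    using f unfolding face_next_def dart_end_def by simp
  obtain m where m: "m = fst_pos w c \<or> m = snd_pos w c" "m \<noteq> i"
    and j: "j = (m + n - 1) mod n"
    using f' ip P unfolding dart_of_start_def rot_def Let_def c_def[symmetric] n_def
    by (auto split: if_splits)
  have ml: "m < n" using m P n_def by auto
  have "(j+1) mod n = m" using mod_back[OF ml] j by simp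
  then show ?thesis using m P c_def n_def j n by auto
qed




lemma two_cons: "2 \<le> length xs \<Longrightarrow> xs = xs!0 # xs!1 # drop 2 xs"
  by (cases xs; cases "tl xs") auto

lemma adj_red:
  assumes g: "gauss_word w" and j: "j < length w"
    and e: "w!j = w!((j+1) mod length w)" and ne: "j \<noteq> (j+1) mod length w"
  shows "reducible w"
proof -
  define n where "n = length w"
  have n2: "2 \<le> n"
  proof -
    have "n \<noteq> 1"
    proof
      assume "n = 1"
      then have "j = 0" "(j+1) mod n = 0" using j n_def by auto
      then show False using ne n_def by simp
    qed
    then show ?thesis using j n_def by linarith
  qed
  define u where "u = rotate j w"
  have lu: "length u = n" unfolding u_def n_def by simp
  have wn: "w \<noteq> []" using n2 n_def by auto
  have u0: "u!0 = w!j" unfolding u_def using nth_rotate[of 0 w j] wn j n_def by simp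
  have u1: "u!1 = w!j" unfolding u_def using n2 j e by (simp add: nth_rotate n_def)
  have uu: "rotate j w = w!j # w!j # drop 2 u" using two_cons[of u] lu n2 u0 u1 u_def by simp
  have c: "count_list w (w!j) = 2" using g j unfolding gauss_word_def by simp
  show ?thesis
  proof (rule red_adj[OF c uu])
    show "\<forall>d. d \<noteq> w ! j \<longrightarrow> count_list w d \<noteq> 1"
      using gauss_count[OF g] by (metis zero_neq_one numeral_One num.simps(1) one_neq_zero numeral_eq_iff semiring_norm(85))
  qed
qed

lemma dec:
  assumes "2 \<le> t" "t + 1 < length u"
  shows "u = u!0 # u!1 # take (t-2) (drop 2 u) @ u!t # u!(t+1) # drop (t+2) u"
proof -
  have a: "drop t u = u!t # u!(t+1) # drop (t+2) u"
  proof -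
    have "drop t u = u!t # drop (Suc t) u" using assms by (simp add: Cons_nth_drop_Suc)
    moreover have "drop (Suc t) u = u!(t+1) # drop (t+2) u" using assms
      by (metis Cons_nth_drop_Suc Suc_eq_plus1 add_2_eq_Suc')
    ultimately show ?thesis by simp
  qed
  have b: "take t u = take 2 u @ take (t-2) (drop 2 u)"
  proof -
    have "t = 2 + (t-2)" using assms by simp
    then show ?thesis by (metis take_add)
  qed
  have c: "take 2 u = [u!0, u!1]"
  proof -
    have "u = u!0 # u!1 # drop 2 u" using assms two_cons[of u] by simp
    then show ?thesis by (metis numeral_2_eq_2 take_0 take_Suc_Cons)
  qed
  show ?thesis using a b c by (metis append_Cons append_Nil append_take_drop_id)
qed

lemma big:
  assumes g: "gauss_word w" and i: "i < length w" and j: "j < length w" and ij: "i \<noteq> j"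
    and e1: "w!j = w!((i+1) mod length w)" and e2: "w!((j+1) mod length w) = w!i"
    and n1: "j \<noteq> (i+1) mod length w" and n2: "(j+1) mod length w \<noteq> i"
  shows "reductivity w \<le> 2"
proof -
  define n where "n = length w"
  define t where "t = (if i \<le> j then j - i else j + n - i)"
  have tn: "t < n" unfolding t_def using i j n_def by auto
  have it: "(i + t) mod n = j" unfolding t_def using i j n_def by auto
  have it1: "(i + (t+1)) mod n = (j+1) mod n"
  proof (cases "i \<le> j")
    case True then show ?thesis unfolding t_def by simp
  next
    case False
    then have "i + (t+1) = (j+1) + n" unfolding t_def using i n_def by simp
    then show ?thesis by (metis mod_add_self2)
  qed
  have t2: "2 \<le> t"
  proof (rule ccontr)
    assume "\<not> 2 \<le> t"
    then have "t = 0 \<or> t = 1" by auto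
    then show False
    proof
      assume "t = 0" then show False using it i j ij n_def by simp
    next
      assume "t = 1" then show False using it i n1 n_def by (simp add: add.commute)
    qed
  qed
  have t3: "t + 1 < n"
  proof (rule ccontr)
    assume "\<not> t + 1 < n"
    then have "t + 1 = n" using tn by simp
    then have "(i + (t+1)) mod n = i" using i n_def by simp
    then show False using it1 n2 n_def by simp
  qed
  define u where "u = rotate i w"
  have lu: "length u = n" unfolding u_def n_def by simp
  have un: "u!k = w!((i+k) mod n)" if "k < n" for k
    unfolding u_def using that by (simp add: nth_rotate n_def)
  have "rotate i w = w!i # w!j # take (t-2) (drop 2 u) @ w!j # w!i # drop (t+2) u"
  proof -
    have "w \<noteq> []" using i by auto
    then have "u!0 = w!i" using un[of 0] i n_def by simp
    moreover have "u!1 = w!j" using un[of 1] t2 t3 e1 by (simp add: n_def)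
    moreover have "u!t = w!j" using un[of t] tn it by simp
    moreover have "u!(t+1) = w!i" using un[of "t+1"] t3 it1 e2 n_def by simp
    ultimately show ?thesis using dec[OF t2, of u] t3 lu u_def by simp
  qed
  from comb[OF g this] obtain m w' where "m \<le> 2" "(splice_step ^^ m) w w'" "reducible w'"
    by blast
  then have "reductivity w \<le> m" unfolding reductivity_def by (intro Least_le) blast
  then show ?thesis using \<open>m \<le> 2\<close> by simp
qed




lemma funpow_fix: "f d = d \<Longrightarrow> (f ^^ k) d = d"
  by (induct k) auto

theorem mainTheorem3:
  fixes w :: "'a list" and eps :: "'a \<Rightarrow> bool"
  assumes "spherical_curve w eps"
    and "has_coherent_bigon w eps"
  shows "reductivity w \<le> 2"
proof -
  have g: "gauss_word w" using assms(1) unfolding spherical_curve_def by blast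
  obtain F where FR: "F \<in> regions w eps" and c2: "card F = 2"
    and sn: "(\<forall>d\<in>F. snd d) \<or> (\<forall>d\<in>F. \<not> snd d)"
    using assms(2) unfolding has_coherent_bigon_def by blast
  obtain d0 where d0: "d0 \<in> darts w" and F: "F = face_of w eps d0"
    using FR unfolding regions_def by blast
  define f where "f = face_next w eps"
  have inF: "(f ^^ k) d0 \<in> F" for k unfolding F face_of_def f_def by blast
  have d0F: "d0 \<in> F" using inF[of 0] by simp
  have d1F: "f d0 \<in> F" using inF[of 1] by simp
  have d2F: "f (f d0) \<in> F" using inF[of 2] by (simp add: numeral_2_eq_2)
  have ne: "f d0 \<noteq> d0"
  proof
    assume "f d0 = d0"
    then have fx: "(f ^^ k) d0 = d0" for k by (rule funpow_fix)
    have "F = {d0}"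
    proof
      show "F \<subseteq> {d0}" unfolding F face_of_def f_def[symmetric] using fx by auto
      show "{d0} \<subseteq> F" using d0F by auto
    qed
    then show False using c2 by simp
  qed
  have fin: "finite F" using c2 card.infinite by fastforce
  have F2: "F = {d0, f d0}"
  proof -
    have "{d0, f d0} \<subseteq> F" using d0F d1F by auto
    moreover have "card {d0, f d0} = 2" using ne by simp
    ultimately show ?thesis using c2 fin by (metis card_subset_eq)
  qed
  have same: "snd (f d0) = snd d0" "snd (f (f d0)) = snd d0" using sn d0F d1F d2F by auto
  define i where "i = fst d0"
  define j where "j = fst (f d0)"
  define b where "b = snd d0"
  have d0e: "d0 = (i, b)" unfolding i_def b_def by simp
  have d1e: "f d0 = (j, b)" unfolding j_def b_def using same by (simp add: prod_eq_iff)
  have i: "i < length w" using d0 unfolding darts_def i_def by auto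
  have ij: "i \<noteq> j" using ne d0e d1e by auto
  have fe: "face_next w eps (i, b) = (j, b)" using d0e d1e f_def by simp
  have T1: "j < length w \<and> (b \<longrightarrow> w!j = w!((i+1) mod length w) \<and> j \<noteq> (i+1) mod length w)
      \<and> (\<not> b \<longrightarrow> w!((j+1) mod length w) = w!i \<and> (j+1) mod length w \<noteq> i)"
  proof (cases b)
    case True then show ?thesis using trans_fwd[OF g i, of eps j] fe by simp
  next
    case False then show ?thesis using trans_bwd[OF g i, of eps j] fe by simp
  qed
  then have j: "j < length w" by blast
  have "f (f d0) = d0 \<or> f (f d0) = f d0" using d2F F2 by simp
  then show ?thesis
  proof
    assume "f (f d0) = d0"
    then have e: "face_next w eps (j, b) = (i, b)" using d0e d1e f_def by simp
    have T2: "(b \<longrightarrow> w!i = w!((j+1) mod length w) \<and> i \<noteq> (j+1) mod length w)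
      \<and> (\<not> b \<longrightarrow> w!((i+1) mod length w) = w!j \<and> (i+1) mod length w \<noteq> j)"
    proof (cases b)
      case True then show ?thesis using trans_fwd[OF g j, of eps i] e by simp
    next
      case False then show ?thesis using trans_bwd[OF g j, of eps i] e by simp
    qed
    have A: "w!j = w!((i+1) mod length w) \<and> w!((j+1) mod length w) = w!i
       \<and> j \<noteq> (i+1) mod length w \<and> (j+1) mod length w \<noteq> i"
    proof (cases b)
      case True then show ?thesis using T1 T2 by metis
    next
      case False then show ?thesis using T1 T2 by metis
    qed
    show ?thesis using big[OF g i j ij] A by blast
  next
    assume "f (f d0) = f d0"
    then have e: "face_next w eps (j, b) = (j, b)" using d1e f_def by simp
    have A: "w!j = w!((j+1) mod length w) \<and> j \<noteq> (j+1) mod length w"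
    proof (cases b)
      case True then show ?thesis using trans_fwd[OF g j, of eps j] e by simp
    next
      case False then show ?thesis using trans_bwd[OF g j, of eps j] e by metis
    qed
    have "reducible w" using adj_red[OF g j] A by blast
    then have "reductivity w \<le> 0" unfolding reductivity_def by (intro Least_le) auto
    then show "reductivity w \<le> 2" by simp
  qed
qed


end
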